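(* Let $p$ be any prime, $G=SL(2,\mathbb{Z}_p)$, $T=\{F\in SL(2,\mathbb{Z}_p):\mathrm{Tr}(F)\neq 2\pmod p\}$ and $\Gamma=\Gamma(G,T)$. Then the independence number satisfies $p\leq\alpha(\Gamma)\leq p+1$.
   Context: The Cayley graph $\Gamma(G,T)$ has vertex set $G$ and an edge between $g_1,g_2$ iff $g_1^{-1}g_2\in T$. An independent set is a set of pairwise non-adjacent vertices; $\alpha(\Gamma)$ is the largest size of an independent set. *)

theory Defs
  imports "HOL-Computational_Algebra.Primes"
begin

text \<open>2x2 matrices over Z_p, represented as quadruples (a,b,c,d) of integers
  standing for the matrix [[a,b],[c,d]], with entries reduced to {0..<p}.\<close>

type_synonym mat2 = "int \<times> int \<times> int \<times> int"

definition SL2 :: "int \<Rightarrow> mat2 set" where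
  "SL2 p = {(a,b,c,d). a \<in> {0..<p} \<and> b \<in> {0..<p} \<and> c \<in> {0..<p} \<and> d \<in> {0..<p}
                        \<and> (a*d - b*c) mod p = 1 mod p}"

fun mmul :: "int \<Rightarrow> mat2 \<Rightarrow> mat2 \<Rightarrow> mat2" where
  "mmul p (a,b,c,d) (e,f,g,h) =
     ((a*e + b*g) mod p, (a*f + b*h) mod p, (c*e + d*g) mod p, (c*f + d*h) mod p)"

fun mtrace :: "mat2 \<Rightarrow> int" where
  "mtrace (a,b,c,d) = a + d"

definition Tset :: "int \<Rightarrow> mat2 set" where
  "Tset p = {F \<in> SL2 p. mtrace F mod p \<noteq> 2 mod p}"

definition cayley_adj :: "int \<Rightarrow> mat2 \<Rightarrow> mat2 \<Rightarrow> bool" where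
  "cayley_adj p g1 g2 \<longleftrightarrow> (\<exists>t \<in> Tset p. mmul p g1 t = g2)"

definition independent_set :: "int \<Rightarrow> mat2 set \<Rightarrow> bool" where
  "independent_set p S \<longleftrightarrow> S \<subseteq> SL2 p \<and>
     (\<forall>x\<in>S. \<forall>y\<in>S. x \<noteq> y \<longrightarrow> \<not> cayley_adj p x y)"

definition independence_number :: "int \<Rightarrow> nat" where
  "independence_number p = Max {card S | S. independent_set p S}"

end

theory Submission
  imports Defs
begin

lemma nil_minors:
  fixes p m n q r m' n' q' r' :: int
  assumes pr: "prime p" and h1: "p dvd m+r" and h2: "p dvd m*r - n*q"
    and h1': "p dvd m'+r'" and h2': "p dvd m'*r' - n'*q'"
    and h3: "p dvd (m-m')*(r-r') - (n-n')*(q-q')"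
  shows "p dvd m*n' - n*m' \<and> p dvd m*q' - q*m' \<and> p dvd n*q' - q*n'
       \<and> p dvd m*r' - r*m' \<and> p dvd n*r' - r*n' \<and> p dvd q*r' - r*q'"
proof -
  obtain k where k: "m + r = p*k" using h1 by (auto elim: dvdE)
  obtain k' where k': "m' + r' = p*k'" using h1' by (auto elim: dvdE)
  have r: "r = p*k - m" using k by simp
  have r': "r' = p*k' - m'" using k' by simp
  define A where "A = m^2 + n*q"
  define A' where "A' = m'^2 + n'*q'"
  define B where "B = 2*m*m' + n*q' + q*n'"
  have "m*r - n*q = p*(m*k) - A" unfolding A_def r by (simp add: algebra_simps power2_eq_square)
  hence hA: "p dvd A" using h2 by (metis dvd_diff dvd_triv_left minus_diff_eq dvd_minus_iff diff_diff_eq2 add_diff_cancel_left')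
  have "m'*r' - n'*q' = p*(m'*k') - A'" unfolding A'_def r' by (simp add: algebra_simps power2_eq_square)
  hence hA': "p dvd A'" using h2' by (metis dvd_diff dvd_triv_left minus_diff_eq dvd_minus_iff diff_diff_eq2 add_diff_cancel_left')
  have "(m-m')*(r-r') - (n-n')*(q-q') = p*((m-m')*(k-k')) - A - A' + B"
    unfolding A_def A'_def B_def r r' by (simp add: algebra_simps power2_eq_square)
  hence "B = ((m-m')*(r-r') - (n-n')*(q-q')) - p*((m-m')*(k-k')) + A + A'" by simp
  hence hB: "p dvd B" using h3 hA hA' by (metis dvd_add dvd_diff dvd_triv_left)
  have s1: "(m*n' - n*m')^2 = A*n'^2 + A'*n^2 - n*n'*B"
    unfolding A_def A'_def B_def by (simp add: algebra_simps power2_eq_square)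
  have s2: "(m*q' - q*m')^2 = A*q'^2 + A'*q^2 - q*q'*B"
    unfolding A_def A'_def B_def by (simp add: algebra_simps power2_eq_square)
  have s3: "(n*q' - q*n')^2 = B^2 - 4*B*m*m' - 4*A*A' + 4*A*m'^2 + 4*A'*m^2"
    unfolding A_def A'_def B_def by (simp add: algebra_simps power2_eq_square)
  have sq: "p dvd x" if "p dvd x^2" for x :: int
    using that pr prime_dvd_power by blast
  have d1: "p dvd m*n' - n*m'" apply (rule sq) unfolding s1 using hA hA' hB
    by (simp add: dvd_add dvd_diff)
  have d2: "p dvd m*q' - q*m'" apply (rule sq) unfolding s2 using hA hA' hB
    by (simp add: dvd_add dvd_diff)
  have d3: "p dvd n*q' - q*n'" apply (rule sq) unfolding s3 using hA hA' hB
    by (simp add: dvd_add dvd_diff power2_eq_square)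
  have e4: "m*r' - r*m' = p*(m*k' - k*m')" unfolding r r' by (simp add: algebra_simps)
  have e5: "n*r' - r*n' = p*(n*k' - k*n') + (m*n' - n*m')" unfolding r r' by (simp add: algebra_simps)
  have e6: "q*r' - r*q' = p*(q*k' - k*q') + (m*q' - q*m')" unfolding r r' by (simp add: algebra_simps)
  show ?thesis using d1 d2 d3 unfolding e4 e5 e6 by simp
qed

lemma lin_minor:
  fixes p :: int and M1 M2 M3 M4 N1 N2 N3 N4 a1 a2 a3 a4 b1 b2 b3 b4 :: int
  assumes "p dvd M1*N2 - M2*N1" "p dvd M1*N3 - M3*N1" "p dvd M1*N4 - M4*N1"
    "p dvd M2*N3 - M3*N2" "p dvd M2*N4 - M4*N2" "p dvd M3*N4 - M4*N3"
  shows "p dvd (a1*M1+a2*M2+a3*M3+a4*M4)*(b1*N1+b2*N2+b3*N3+b4*N4)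
               - (b1*M1+b2*M2+b3*M3+b4*M4)*(a1*N1+a2*N2+a3*N3+a4*N4)"
proof -
  have "(a1*M1+a2*M2+a3*M3+a4*M4)*(b1*N1+b2*N2+b3*N3+b4*N4)
               - (b1*M1+b2*M2+b3*M3+b4*M4)*(a1*N1+a2*N2+a3*N3+a4*N4)
       = (a1*b2-a2*b1)*(M1*N2 - M2*N1) + (a1*b3-a3*b1)*(M1*N3 - M3*N1)
       + (a1*b4-a4*b1)*(M1*N4 - M4*N1) + (a2*b3-a3*b2)*(M2*N3 - M3*N2)
       + (a2*b4-a4*b2)*(M2*N4 - M4*N2) + (a3*b4-a4*b3)*(M3*N4 - M4*N3)"
    by algebra
  thus ?thesis using assms by (simp add: dvd_add)
qed

lemma core:
  fixes p a b c d y1 y2 y3 y4 z1 z2 z3 z4 :: int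
  assumes pr: "prime p"
    and hx: "p dvd a*d - b*c - 1" and hy: "p dvd y1*y4 - y2*y3 - 1" and hz: "p dvd z1*z4 - z2*z3 - 1"
    and hxy: "p dvd (a-y1)*(d-y4) - (b-y2)*(c-y3)"
    and hxz: "p dvd (a-z1)*(d-z4) - (b-z2)*(c-z3)"
    and hyz: "p dvd (y1-z1)*(y4-z4) - (y2-z2)*(y3-z3)"
  defines "D1 \<equiv> y1 - a" and "D2 \<equiv> y2 - b" and "D3 \<equiv> y3 - c" and "D4 \<equiv> y4 - d"
    and "E1 \<equiv> z1 - a" and "E2 \<equiv> z2 - b" and "E3 \<equiv> z3 - c" and "E4 \<equiv> z4 - d"
  shows "p dvd D1*E2 - D2*E1 \<and> p dvd D1*E3 - D3*E1 \<and> p dvd D1*E4 - D4*E1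
       \<and> p dvd D2*E3 - D3*E2 \<and> p dvd D2*E4 - D4*E2 \<and> p dvd D3*E4 - D4*E3"
proof -
  define det0 where "det0 = a*d - b*c"
  define M1 where "M1 = d*D1 - b*D3"
  define M2 where "M2 = d*D2 - b*D4"
  define M3 where "M3 = a*D3 - c*D1"
  define M4 where "M4 = a*D4 - c*D2"
  define N1 where "N1 = d*E1 - b*E3"
  define N2 where "N2 = d*E2 - b*E4"
  define N3 where "N3 = a*E3 - c*E1"
  define N4 where "N4 = a*E4 - c*E2"
  have q1: "M1 + M4 = (y1*y4 - y2*y3 - 1) - (a*d - b*c - 1) - ((a-y1)*(d-y4) - (b-y2)*(c-y3))"
    unfolding M1_def M4_def D1_def D2_def D3_def D4_def by algebra
  have t1: "p dvd M1 + M4" unfolding q1 by (intro dvd_diff hx hy hxy)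
  have q2: "N1 + N4 = (z1*z4 - z2*z3 - 1) - (a*d - b*c - 1) - ((a-z1)*(d-z4) - (b-z2)*(c-z3))"
    unfolding N1_def N4_def E1_def E2_def E3_def E4_def by algebra
  have t2: "p dvd N1 + N4" unfolding q2 by (intro dvd_diff hx hz hxz)
  have "M1*M4 - M2*M3 = det0 * ((a-y1)*(d-y4) - (b-y2)*(c-y3))"
    unfolding M1_def M2_def M3_def M4_def D1_def D2_def D3_def D4_def det0_def by algebra
  hence t3: "p dvd M1*M4 - M2*M3" using hxy by simp
  have "N1*N4 - N2*N3 = det0 * ((a-z1)*(d-z4) - (b-z2)*(c-z3))"
    unfolding N1_def N2_def N3_def N4_def E1_def E2_def E3_def E4_def det0_def by algebra
  hence t4: "p dvd N1*N4 - N2*N3" using hxz by simp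
  have "(M1-N1)*(M4-N4) - (M2-N2)*(M3-N3) = det0 * ((y1-z1)*(y4-z4) - (y2-z2)*(y3-z3))"
    unfolding M1_def M2_def M3_def M4_def N1_def N2_def N3_def N4_def
      D1_def D2_def D3_def D4_def E1_def E2_def E3_def E4_def det0_def by algebra
  hence t5: "p dvd (M1-N1)*(M4-N4) - (M2-N2)*(M3-N3)" using hyz by simp
  have mm: "p dvd M1*N2 - M2*N1 \<and> p dvd M1*N3 - M3*N1 \<and> p dvd M2*N3 - M3*N2
       \<and> p dvd M1*N4 - M4*N1 \<and> p dvd M2*N4 - M4*N2 \<and> p dvd M3*N4 - M4*N3"
    using nil_minors[OF pr t1 t3 t2 t4 t5] by simp
  have eD1: "det0*D1 = a*M1 + 0*M2 + b*M3 + 0*M4" unfolding M1_def M3_def det0_def by algebra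
  have eD2: "det0*D2 = 0*M1 + a*M2 + 0*M3 + b*M4" unfolding M2_def M4_def det0_def by algebra
  have eD3: "det0*D3 = c*M1 + 0*M2 + d*M3 + 0*M4" unfolding M1_def M3_def det0_def by algebra
  have eD4: "det0*D4 = 0*M1 + c*M2 + 0*M3 + d*M4" unfolding M2_def M4_def det0_def by algebra
  have eE1: "det0*E1 = a*N1 + 0*N2 + b*N3 + 0*N4" unfolding N1_def N3_def det0_def by algebra
  have eE2: "det0*E2 = 0*N1 + a*N2 + 0*N3 + b*N4" unfolding N2_def N4_def det0_def by algebra
  have eE3: "det0*E3 = c*N1 + 0*N2 + d*N3 + 0*N4" unfolding N1_def N3_def det0_def by algebra
  have eE4: "det0*E4 = 0*N1 + c*N2 + 0*N3 + d*N4" unfolding N2_def N4_def det0_def by algebra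
  have ndet: "\<not> p dvd det0"
  proof
    assume "p dvd det0"
    hence "p dvd det0 - (det0 - 1)" using hx unfolding det0_def by (rule dvd_diff)
    hence "p dvd 1" by simp
    thus False using pr not_prime_unit by blast
  qed
  have canc: "p dvd X" if "p dvd (det0*U)*(det0*V) - (det0*W)*(det0*Z)" and "X = U*V - W*Z" for U V W Z X
  proof -
    have "(det0*U)*(det0*V) - (det0*W)*(det0*Z) = det0*(det0*X)" using that(2) by algebra
    hence "p dvd det0*(det0*X)" using that(1) by simp
    thus ?thesis using ndet by (simp add: prime_dvd_mult_iff[OF pr])
  qed
  have L: "p dvd (a1*M1+a2*M2+a3*M3+a4*M4)*(b1*N1+b2*N2+b3*N3+b4*N4)
               - (b1*M1+b2*M2+b3*M3+b4*M4)*(a1*N1+a2*N2+a3*N3+a4*N4)" for a1 a2 a3 a4 b1 b2 b3 b4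
    using mm by - (rule lin_minor, simp_all)
  show ?thesis
  proof (intro conjI)
    show "p dvd D1*E2 - D2*E1" by (rule canc[OF _ refl]) (simp only: eD1 eD2 eE1 eE2 L)
    show "p dvd D1*E3 - D3*E1" by (rule canc[OF _ refl]) (simp only: eD1 eD3 eE1 eE3 L)
    show "p dvd D1*E4 - D4*E1" by (rule canc[OF _ refl]) (simp only: eD1 eD4 eE1 eE4 L)
    show "p dvd D2*E3 - D3*E2" by (rule canc[OF _ refl]) (simp only: eD2 eD3 eE2 eE3 L)
    show "p dvd D2*E4 - D4*E2" by (rule canc[OF _ refl]) (simp only: eD2 eD4 eE2 eE4 L)
    show "p dvd D3*E4 - D4*E3" by (rule canc[OF _ refl]) (simp only: eD3 eD4 eE3 eE4 L)
  qed
qed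

fun ent :: "mat2 \<Rightarrow> nat \<Rightarrow> int" where
  "ent (a,b,c,d) i = (if i = 0 then a else if i = 1 then b else if i = 2 then c else d)"

fun dd :: "mat2 \<Rightarrow> mat2 \<Rightarrow> int" where
  "dd (a,b,c,d) (e,f,g,h) = (a-e)*(d-h) - (b-f)*(c-g)"

lemma lt4: "(i::nat) < 4 \<Longrightarrow> i = 0 \<or> i = 1 \<or> i = 2 \<or> i = 3" by auto

lemma SL2_ent: "x \<in> SL2 p \<Longrightarrow> i < 4 \<Longrightarrow> 0 \<le> ent x i \<and> ent x i < p"
  by (cases x) (auto simp: SL2_def dest!: lt4)

lemma mat_eq: "(\<And>i. i < 4 \<Longrightarrow> ent x i = ent y i) \<Longrightarrow> x = y"
proof -
  assume h: "\<And>i. i < 4 \<Longrightarrow> ent x i = ent y i"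
  obtain a b c d where x: "x = (a,b,c,d)" by (cases x) auto
  obtain e f g k where y: "y = (e,f,g,k)" by (cases y) auto
  show "x = y" using h[of 0] h[of 1] h[of 2] h[of 3] unfolding x y by simp
qed

lemma SL2_det: "(a,b,c,d) \<in> SL2 p \<Longrightarrow> p dvd a*d - b*c - 1"
  unfolding SL2_def by (simp add: mod_eq_dvd_iff)

lemma range_eq:
  fixes u v p :: int
  assumes "0 \<le> u" "u < p" "0 \<le> v" "v < p" "p dvd u - v"
  shows "u = v"
proof -
  have "u mod p = v mod p" using assms(5) by (simp add: mod_eq_dvd_iff)
  thus ?thesis using assms by simp
qed

lemma prop_ent:
  assumes pr: "prime p" and x0: "x0 \<in> SL2 p" and y: "y \<in> SL2 p" and z: "z \<in> SL2 p"
    and h1: "p dvd dd x0 y" and h2: "p dvd dd x0 z" and h3: "p dvd dd y z"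
    and i: "i < 4" and j: "j < 4"
  shows "p dvd (ent y i - ent x0 i)*(ent z j - ent x0 j) - (ent y j - ent x0 j)*(ent z i - ent x0 i)"
proof -
  obtain a b c d where ex: "x0 = (a,b,c,d)" by (cases x0) auto
  obtain y1 y2 y3 y4 where ey: "y = (y1,y2,y3,y4)" by (cases y) auto
  obtain z1 z2 z3 z4 where ez: "z = (z1,z2,z3,z4)" by (cases z) auto
  have C: "p dvd (y1-a)*(z2-b) - (y2-b)*(z1-a) \<and> p dvd (y1-a)*(z3-c) - (y3-c)*(z1-a)
     \<and> p dvd (y1-a)*(z4-d) - (y4-d)*(z1-a) \<and> p dvd (y2-b)*(z3-c) - (y3-c)*(z2-b)
     \<and> p dvd (y2-b)*(z4-d) - (y4-d)*(z2-b) \<and> p dvd (y3-c)*(z4-d) - (y4-d)*(z3-c)"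
    by (rule core[OF pr SL2_det SL2_det SL2_det])
       (use x0 y z h1 h2 h3 in \<open>simp_all add: ex ey ez\<close>)
  have neg: "p dvd v - u" if "p dvd u - v" for u v :: int
    using that by (metis dvd_minus_iff minus_diff_eq)
  from C have C': "p dvd (y2-b)*(z1-a) - (y1-a)*(z2-b) \<and> p dvd (y3-c)*(z1-a) - (y1-a)*(z3-c)
     \<and> p dvd (y4-d)*(z1-a) - (y1-a)*(z4-d) \<and> p dvd (y3-c)*(z2-b) - (y2-b)*(z3-c)
     \<and> p dvd (y4-d)*(z2-b) - (y2-b)*(z4-d) \<and> p dvd (y4-d)*(z3-c) - (y3-c)*(z4-d)"
    using neg by blast
  show ?thesis using lt4[OF i] lt4[OF j] C C' unfolding ex ey ez by auto
qed

lemma finite_SL2: "finite (SL2 p)"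
proof -
  have "SL2 p \<subseteq> {0..<p} \<times> {0..<p} \<times> {0..<p} \<times> {0..<p}" unfolding SL2_def by auto
  thus ?thesis by (rule finite_subset) auto
qed

lemma card_bound:
  assumes pr: "prime p" and S: "S \<subseteq> SL2 p" and D: "\<forall>x\<in>S. \<forall>y\<in>S. p dvd dd x y"
  shows "card S \<le> nat p"
proof -
  have p2: "p \<ge> 2" using pr by (simp add: prime_ge_2_int)
  have fin: "finite S" using S finite_SL2 finite_subset by blast
  show ?thesis
  proof (cases "\<exists>x0\<in>S. \<exists>x1\<in>S. x0 \<noteq> x1")
    case False
    hence "card S \<le> 1" using fin by (metis card_le_Suc0_iff_eq One_nat_def)
    thus ?thesis using p2 by linarith
  next
    case True
    then obtain x0 x1 where x0: "x0 \<in> S" and x1: "x1 \<in> S" and ne: "x0 \<noteq> x1" by blast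
    obtain k where k: "k < 4" "ent x1 k \<noteq> ent x0 k" using ne mat_eq by metis
    have nd: "\<not> p dvd ent x1 k - ent x0 k"
      using k range_eq SL2_ent x0 x1 S by blast
    have inj: "inj_on (\<lambda>y. ent y k) S"
    proof (rule inj_onI)
      fix y z assume y: "y \<in> S" and z: "z \<in> S" and eq: "ent y k = ent z k"
      show "y = z"
      proof (rule mat_eq)
        fix j :: nat assume j: "j < 4"
        have A: "p dvd (ent x1 k - ent x0 k)*(ent y j - ent x0 j) - (ent x1 j - ent x0 j)*(ent y k - ent x0 k)"
          by (rule prop_ent[OF pr _ _ _ _ _ _ k(1) j]) (use x0 x1 y S D in auto)
        have B: "p dvd (ent x1 k - ent x0 k)*(ent z j - ent x0 j) - (ent x1 j - ent x0 j)*(ent z k - ent x0 k)"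
          by (rule prop_ent[OF pr _ _ _ _ _ _ k(1) j]) (use x0 x1 z S D in auto)
        have "(ent x1 k - ent x0 k)*(ent y j - ent z j) =
          ((ent x1 k - ent x0 k)*(ent y j - ent x0 j) - (ent x1 j - ent x0 j)*(ent y k - ent x0 k))
          - ((ent x1 k - ent x0 k)*(ent z j - ent x0 j) - (ent x1 j - ent x0 j)*(ent z k - ent x0 k))"
          using eq by (simp add: algebra_simps)
        hence "p dvd (ent x1 k - ent x0 k)*(ent y j - ent z j)" using A B by (simp add: dvd_diff)
        hence "p dvd ent y j - ent z j" using nd by (simp add: prime_dvd_mult_iff[OF pr])
        thus "ent y j = ent z j" using range_eq SL2_ent y z S j by blast
      qed
    qed
    have "(\<lambda>y. ent y k) ` S \<subseteq> {0..<p}" using SL2_ent S k(1) by fastforce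
    hence "card ((\<lambda>y. ent y k) ` S) \<le> card {0..<p}" by (rule card_mono[rotated]) simp
    thus ?thesis using card_image[OF inj] by simp
  qed
qed

lemma mm1: "(a*(X mod p) + b*(Y mod p)) mod p = (a*X + b*Y) mod (p::int)"
  by (metis mod_add_eq mod_mult_right_eq)

lemma mm2: "(u::int) mod p = 1 \<Longrightarrow> 0 \<le> e \<Longrightarrow> e < p \<Longrightarrow> (e*u) mod p = e"
  by (metis mod_mult_right_eq mult_1_right mod_pos_pos_trivial)

lemma adj_lemma:
  assumes pr: "prime p" and x: "x \<in> SL2 p" and y: "y \<in> SL2 p" and nd: "\<not> p dvd dd x y"
  shows "cayley_adj p x y"
proof -
  obtain a b c d where ex: "x = (a,b,c,d)" by (cases x) auto
  obtain e f g h where ey: "y = (e,f,g,h)" by (cases y) auto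
  have p1: "p > 1" using pr prime_gt_1_int by blast
  have rx: "0 \<le> a" "a < p" "0 \<le> b" "b < p" "0 \<le> c" "c < p" "0 \<le> d" "d < p"
    and dx: "(a*d - b*c) mod p = 1" using x p1 unfolding ex SL2_def by auto
  have ry: "0 \<le> e" "e < p" "0 \<le> f" "f < p" "0 \<le> g" "g < p" "0 \<le> h" "h < p"
    and dy: "(e*h - f*g) mod p = 1" using y p1 unfolding ey SL2_def by auto
  define t where "t = ((d*e - b*g) mod p, (d*f - b*h) mod p, (a*g - c*e) mod p, (a*h - c*f) mod p)"
  have "((d*e - b*g) mod p * ((a*h - c*f) mod p) - (d*f - b*h) mod p * ((a*g - c*e) mod p)) mod p
      = ((d*e - b*g) * (a*h - c*f) - (d*f - b*h) * (a*g - c*e)) mod p"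
    by (metis mod_diff_eq mod_mult_eq)
  also have "(d*e - b*g) * (a*h - c*f) - (d*f - b*h) * (a*g - c*e) = (e*h - f*g) * (a*d - b*c)"
    by algebra
  also have "((e*h - f*g) * (a*d - b*c)) mod p = 1"
    using dx dy p1 by (metis mod_mult_eq mult_1 mod_pos_pos_trivial zero_le_one)
  finally have dett: "((d*e - b*g) mod p * ((a*h - c*f) mod p) - (d*f - b*h) mod p * ((a*g - c*e) mod p)) mod p = 1" .
  have tSL: "t \<in> SL2 p" unfolding t_def SL2_def using dett p1 by simp
  have tr: "mtrace t mod p \<noteq> 2 mod p"
  proof
    assume "mtrace t mod p = 2 mod p"
    hence "((d*e - b*g) + (a*h - c*f)) mod p = 2 mod p" unfolding t_def by (simp add: mod_add_eq)
    hence tt: "p dvd ((d*e - b*g) + (a*h - c*f)) - 2" by (simp add: mod_eq_dvd_iff)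
    have one: "1 mod p = 1" using p1 by simp
    have u1: "p dvd a*d - b*c - 1" and u2: "p dvd e*h - f*g - 1"
      using dx dy one by (simp_all add: mod_eq_dvd_iff[symmetric])
    have deq: "dd x y = (a*d - b*c - 1) + (e*h - f*g - 1) - (((d*e - b*g) + (a*h - c*f)) - 2)"
      unfolding ex ey by (simp add: algebra_simps)
    have "p dvd dd x y" unfolding deq by (intro dvd_diff dvd_add u1 u2 tt)
    thus False using nd by simp
  qed
  have "mmul p x t = y"
  proof -
    have 1: "(a*((d*e - b*g) mod p) + b*((a*g - c*e) mod p)) mod p = e"
      unfolding mm1 using mm2[OF dx ry(1,2)] by (simp add: algebra_simps)
    have 2: "(a*((d*f - b*h) mod p) + b*((a*h - c*f) mod p)) mod p = f"
      unfolding mm1 using mm2[OF dx ry(3,4)] by (simp add: algebra_simps)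
    have 3: "(c*((d*e - b*g) mod p) + d*((a*g - c*e) mod p)) mod p = g"
      unfolding mm1 using mm2[OF dx ry(5,6)] by (simp add: algebra_simps)
    have 4: "(c*((d*f - b*h) mod p) + d*((a*h - c*f) mod p)) mod p = h"
      unfolding mm1 using mm2[OF dx ry(7,8)] by (simp add: algebra_simps)
    show ?thesis unfolding ex ey t_def using 1 2 3 4 by simp
  qed
  thus ?thesis unfolding cayley_adj_def Tset_def using tSL tr by blast
qed

lemma dd_self: "dd x x = 0" by (cases x) simp

lemma indep_dd: "prime p \<Longrightarrow> independent_set p S \<Longrightarrow> \<forall>x\<in>S. \<forall>y\<in>S. p dvd dd x y"
  unfolding independent_set_def using adj_lemma dd_self by (metis dvd_0_right subsetD)

definition S0 :: "int \<Rightarrow> mat2 set" where "S0 p = (\<lambda>k. (1,k,0,1)) ` {0..<p}"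

lemma S0_indep:
  assumes pr: "prime p" shows "independent_set p (S0 p)"
proof -
  have p1: "p > 1" using pr prime_gt_1_int by blast
  have sub: "S0 p \<subseteq> SL2 p" unfolding S0_def SL2_def using p1 by auto
  have na: "\<not> cayley_adj p (1,k,0,1) (1,l,0,1)" if "k \<in> {0..<p}" for k l
  proof
    assume "cayley_adj p (1,k,0,1) (1,l,0,1)"
    then obtain ta tb tc td where tT: "(ta,tb,tc,td) \<in> Tset p"
      and m: "mmul p (1,k,0,1) (ta,tb,tc,td) = (1,l,0,1)"
      unfolding cayley_adj_def by auto
    have r: "0 \<le> ta" "ta < p" "0 \<le> tc" "tc < p" "0 \<le> td" "td < p" "mtrace (ta,tb,tc,td) mod p \<noteq> 2 mod p"
      using tT unfolding Tset_def SL2_def by auto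
    from m have "tc mod p = 0" "td mod p = 1" "(ta + k*tc) mod p = 1" by auto
    hence "tc = 0" "td = 1" "ta = 1" using r by simp_all
    thus False using r(7) by simp
  qed
  show ?thesis unfolding independent_set_def using sub na unfolding S0_def by auto
qed

lemma card_S0: "p \<ge> 0 \<Longrightarrow> card (S0 p) = nat p"
proof -
  have "inj_on (\<lambda>k::int. (1::int,k,0::int,1::int)) {0..<p}" by (rule inj_onI) simp
  thus "p \<ge> 0 \<Longrightarrow> card (S0 p) = nat p" unfolding S0_def by (simp add: card_image)
qed

theorem mainTheorem5:
  fixes p :: int
  assumes "prime p"
  shows "p \<le> int (independence_number p) \<and> int (independence_number p) \<le> p + 1"
proof -
  have p1: "p > 1" using assms prime_gt_1_int by blast
  define C where "C = {card S | S. independent_set p S}"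
  have le: "c \<le> nat p" if "c \<in> C" for c
    using that card_bound[OF assms] indep_dd[OF assms] unfolding C_def independent_set_def by blast
  have fin: "finite C" using le by (meson finite_atMost finite_subset atMost_iff subsetI)
  have "card (S0 p) = nat p" using card_S0 p1 by simp
  hence mem: "nat p \<in> C" unfolding C_def using S0_indep[OF assms] by (auto intro!: exI[of _ "S0 p"])
  have "Max C = nat p" using fin mem le by (meson Max_eqI)
  hence "independence_number p = nat p" unfolding independence_number_def C_def by simp
  thus ?thesis using p1 by simp
qed

end
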